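(* Let $q=2^f$ with $f\ge4$, let $q_0<q$ be a power of $2$ with $\gcd(q-1,q_0^2-1)=1$, and let $u\in\mathscr{U}_{q,q_0}$. The only automorphism of $\Gamma_u$ that fixes every vertex of $\{\varepsilon\}\cup\Omega_\infty$ is the identity.
   Context: For $a,c\in\mathbb{F}_q$ let $\Phi_{a,c}=\begin{bmatrix}1&0&0\\ a&1&0\\ c&a^{q_0}&1\end{bmatrix}$, $K=\{\Phi_{a,c}: a,c\in\mathbb{F}_q\}\le GL(3,\mathbb{F}_q)$ with identity $\varepsilon=\Phi_{0,0}$; $\Omega_\infty=\{\Phi_{0,c}:c\in\mathbb{F}_q^*\}$ and for $v\in\mathbb{F}_q$, $\Omega_v=\{\Phi_{a,va^{q_0+1}}: a\in\mathbb{F}_q^*\}$. $\Gamma_u=\mathrm{Cay}(K,\Omega_u\cup\Omega_{u+1})$ is the graph with vertex set $K$, $x,y$ adjacent iff $xy^{-1}\in\Omega_u\cup\Omega_{u+1}$. $\mathscr{U}_{q,q_0}$ is the set of $u\in\mathbb{F}_q$ such that (U1) $u=(1+\eta^{q_0})/(\eta+\eta^{q_0})$ for some primitive element $\eta$ of $\mathbb{F}_q$, and (U2) $X^{q_0+1}+uX^{q_0}+(u+1)X+1$ has no roots in $\mathbb{F}_q$. *)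

theory Defs
  imports "HOL-Analysis.Analysis"
begin

definition Phi :: "nat \<Rightarrow> 'a::field \<Rightarrow> 'a \<Rightarrow> 'a^3^3" where
  "Phi q0 a c = vector [vector [1, 0, 0], vector [a, 1, 0], vector [c, a ^ q0, 1]]"

definition Kgrp :: "nat \<Rightarrow> (('a::field)^3^3) set" where
  "Kgrp q0 = {Phi q0 a c | a c. True}"

definition Omega_inf :: "nat \<Rightarrow> (('a::field)^3^3) set" where
  "Omega_inf q0 = {Phi q0 0 c | c. c \<noteq> 0}"

definition Omega :: "nat \<Rightarrow> 'a::field \<Rightarrow> ('a^3^3) set" where
  "Omega q0 v = {Phi q0 a (v * a ^ (q0 + 1)) | a. a \<noteq> 0}"

definition cay_adj :: "(('a::field)^3^3) set \<Rightarrow> 'a^3^3 \<Rightarrow> 'a^3^3 \<Rightarrow> bool" where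
  "cay_adj S x y = (\<exists>s\<in>S. x = s ** y)"

definition Gamma_adj :: "nat \<Rightarrow> 'a::field \<Rightarrow> 'a^3^3 \<Rightarrow> 'a^3^3 \<Rightarrow> bool" where
  "Gamma_adj q0 u = cay_adj (Omega q0 u \<union> Omega q0 (u + 1))"

definition graph_automorphism :: "'v set \<Rightarrow> ('v \<Rightarrow> 'v \<Rightarrow> bool) \<Rightarrow> ('v \<Rightarrow> 'v) \<Rightarrow> bool" where
  "graph_automorphism V adj \<sigma> =
     (bij_betw \<sigma> V V \<and> (\<forall>x\<in>V. \<forall>y\<in>V. adj x y \<longleftrightarrow> adj (\<sigma> x) (\<sigma> y)))"

definition primitive_element :: "'a::field \<Rightarrow> bool" where
  "primitive_element \<eta> = (\<eta> \<noteq> 0 \<and> (\<forall>x. x \<noteq> 0 \<longrightarrow> (\<exists>k::nat. x = \<eta> ^ k)))"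

definition U_set :: "nat \<Rightarrow> 'a::field set" where
  "U_set q0 = {u. (\<exists>\<eta>. primitive_element \<eta> \<and> u = (1 + \<eta> ^ q0) / (\<eta> + \<eta> ^ q0))
               \<and> \<not> (\<exists>x. x ^ (q0 + 1) + u * x ^ q0 + (u + 1) * x + 1 = 0)}"

end

theory Submission
  imports Defs
begin

lemma Phi_inj: "Phi q0 a c = Phi q0 b d \<longleftrightarrow> a = b \<and> c = d"
proof
  assume h: "Phi q0 a c = Phi q0 b d"
  have "Phi q0 a c $ 2 $ 1 = Phi q0 b d $ 2 $ 1" "Phi q0 a c $ 3 $ 1 = Phi q0 b d $ 3 $ 1" using h by auto
  then show "a = b \<and> c = d" by (simp add: Phi_def)
qed simp

lemma Phi_mult:
  fixes a b c d :: "'a::field"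
  assumes "\<And>x y::'a. (x+y)^q0 = x^q0 + y^q0"
  shows "Phi q0 a c ** Phi q0 b d = Phi q0 (a+b) (c + d + a^q0 * b)"
  unfolding Phi_def
  by (simp add: matrix_matrix_mult_def vec_eq_iff forall_3 sum_3 assms algebra_simps)

lemma char2_frob:
  fixes x y :: "'a::field"
  assumes "(2::'a) = 0"
  shows "(x+y)^(2^e) = x^(2^e) + y^(2^e)"
proof (induction e)
  case (Suc e)
  have sq: "\<And>z::'a. z^(2^Suc e) = (z^(2^e))^2" by (metis power_Suc2 power_mult)
  have "(x+y)^(2^Suc e) = ((x+y)^(2^e))^2" by (rule sq)
  also have "... = (x^(2^e) + y^(2^e))^2" using Suc by simp
  also have "... = (x^(2^e))^2 + (y^(2^e))^2 + 2 * x^(2^e) * y^(2^e)" by (simp add: power2_eq_square algebra_simps)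
  also have "... = x^(2^Suc e) + y^(2^Suc e)" using assms by (simp only: sq mult_zero_left add_0_right)
  finally show ?case .
qed simp

lemma char2_from_card:
  assumes "CARD('a::{field,finite}) = 2^f" "f \<ge> 1"
  shows "(2::'a) = 0"
proof -
  have "(\<Sum>y\<in>UNIV. (1::'a) + y) = (\<Sum>y\<in>UNIV. y)"
    by (rule sum.reindex_bij_witness[where i="\<lambda>y. y - 1" and j="\<lambda>y. 1 + y"]) auto
  then have "of_nat CARD('a) = (0::'a)" by (simp add: sum.distrib)
  then have "(2::'a)^f = 0" using assms(1) by simp
  then show ?thesis by simp
qed

lemma pow_card_minus1:
  fixes z :: "'a::{field,finite}"
  assumes "z \<noteq> 0"
  shows "z ^ (CARD('a) - 1) = 1"
proof -
  let ?N = "UNIV - {0::'a}"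
  have "(\<Prod>x\<in>?N. z * x) = (\<Prod>x\<in>?N. x)"
    by (rule prod.reindex_bij_witness[where i="\<lambda>y. y / z" and j="\<lambda>y. z * y"]) (use assms in auto)
  moreover have "(\<Prod>x\<in>?N. z * x) = z ^ card ?N * (\<Prod>x\<in>?N. x)" by (simp add: prod.distrib)
  moreover have "card ?N = CARD('a) - 1" by (simp add: card_Diff_singleton)
  moreover have "(\<Prod>x\<in>?N. x) \<noteq> 0" by simp
  ultimately show ?thesis by simp
qed

lemma pow_inj:
  fixes x y :: "'a::{field,finite}"
  assumes "coprime n (CARD('a) - 1)" "n > 0" "x^n = y^n"
  shows "x = y"
proof (cases "y = 0")
  case True then show ?thesis using assms by (metis power_eq_0_iff zero_power)
next
  case False
  let ?z = "x / y"
  have z1: "?z ^ n = 1" using assms False by (simp add: power_divide)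
  have z2: "?z ^ (CARD('a) - 1) = 1"
    using pow_card_minus1[of ?z] assms False z1 by (cases "x = 0") (auto simp: zero_power)
  obtain k l where kl: "n * k = (CARD('a) - 1) * l + gcd n (CARD('a) - 1)"
    using bezout_nat[of n "CARD('a) - 1"] assms by auto
  have "?z ^ (n*k) = 1" using z1 by (simp add: power_mult)
  moreover have "?z ^ (n*k) = ?z" using kl z2 assms(1) by (simp add: power_add power_mult)
  ultimately have "?z = 1" by simp
  then show ?thesis using False by simp
qed


lemma char2_simps:
  fixes x y :: "'a::field"
  assumes "(2::'a) = 0"
  shows "x + x = 0" "x + (x + y) = y" "x + y = 0 \<longleftrightarrow> x = y"
proof -
  have xx: "z + z = 0" for z :: 'a
  proof -
    have "z + z = 2 * z" by simp
    then show ?thesis using assms by simp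
  qed
  show "x + x = 0" by (rule xx)
  show xy: "x + (x + y) = y" by (metis add.assoc add_0 xx)
  show "x + y = 0 \<longleftrightarrow> x = y" by (metis xy add_0_right xx)
qed

lemma adj_iff:
  fixes a b c d u :: "'a::field"
  assumes two: "(2::'a) = 0" and frob: "\<And>x y::'a. (x+y)^q0 = x^q0 + y^q0"
  shows "Gamma_adj q0 u (Phi q0 a c) (Phi q0 b d) \<longleftrightarrow>
    a \<noteq> b \<and> (c = u*(a+b)^(q0+1) + d + (a+b)^q0*b \<or> c = (u+1)*(a+b)^(q0+1) + d + (a+b)^q0*b)"
proof -
  note c2 = char2_simps[OF two]
  have "Gamma_adj q0 u (Phi q0 a c) (Phi q0 b d) \<longleftrightarrow>
     (\<exists>g w. g \<noteq> 0 \<and> (w = u \<or> w = u + 1) \<and> Phi q0 a c = Phi q0 (g+b) (w*g^(q0+1) + d + g^q0*b))"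
    unfolding Gamma_adj_def cay_adj_def Omega_def
  proof
    assume "\<exists>s\<in>{Phi q0 a (u * a ^ (q0 + 1)) |a. a \<noteq> 0} \<union> {Phi q0 a ((u + 1) * a ^ (q0 + 1)) |a. a \<noteq> 0}.
         Phi q0 a c = s ** Phi q0 b d"
    then obtain g w where "g \<noteq> 0" "w = u \<or> w = u + 1" "Phi q0 a c = Phi q0 g (w * g^(q0+1)) ** Phi q0 b d"
      by blast
    then show "\<exists>g w. g \<noteq> 0 \<and> (w = u \<or> w = u + 1) \<and> Phi q0 a c = Phi q0 (g+b) (w*g^(q0+1) + d + g^q0*b)"
      by (auto simp: Phi_mult[OF frob])
  next
    assume "\<exists>g w. g \<noteq> 0 \<and> (w = u \<or> w = u + 1) \<and> Phi q0 a c = Phi q0 (g+b) (w*g^(q0+1) + d + g^q0*b)"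
    then obtain g w where h: "g \<noteq> 0" "w = u \<or> w = u + 1" "Phi q0 a c = Phi q0 g (w * g^(q0+1)) ** Phi q0 b d"
      by (auto simp: Phi_mult[OF frob])
    have "Phi q0 g (w * g^(q0+1)) \<in> {Phi q0 a (u * a ^ (q0 + 1)) |a. a \<noteq> 0} \<union> {Phi q0 a ((u + 1) * a ^ (q0 + 1)) |a. a \<noteq> 0}"
      using h(1,2) by blast
    with h(3) show "\<exists>s\<in>{Phi q0 a (u * a ^ (q0 + 1)) |a. a \<noteq> 0} \<union> {Phi q0 a ((u + 1) * a ^ (q0 + 1)) |a. a \<noteq> 0}.
         Phi q0 a c = s ** Phi q0 b d" by blast
  qed
  also have "\<dots> \<longleftrightarrow> (\<exists>g w. g \<noteq> 0 \<and> (w = u \<or> w = u + 1) \<and> g = a + b \<and> c = w*g^(q0+1) + d + g^q0*b)"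
  proof -
    have "a = g + b \<longleftrightarrow> g = a + b" for g
      by (metis add.commute c2(2))
    then show ?thesis by (simp add: Phi_inj)
  qed
  also have "\<dots> \<longleftrightarrow> a + b \<noteq> 0 \<and> (c = u*(a+b)^(q0+1) + d + (a+b)^q0*b \<or> c = (u+1)*(a+b)^(q0+1) + d + (a+b)^q0*b)"
    by auto
  also have "a + b \<noteq> 0 \<longleftrightarrow> a \<noteq> b"
    by (metis add.commute add_0_right c2(1) c2(2))
  finally show ?thesis by simp
qed


lemma c2_case1:
  fixes u B B' d d' :: "'a::field"
  assumes two: "(2::'a) = 0" and B0: "B \<noteq> 0"
    and e1: "d' = u*B' + (d + u*B) \<or> d' = (u+1)*B' + (d + u*B)"
    and e2: "d' = u*B' + (d + (u+1)*B) \<or> d' = (u+1)*B' + (d + (u+1)*B)"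
  shows "B' = B \<and> (d' = d \<or> d' = d + B)"
proof -
  note c2 = char2_simps[OF two]
  from e1 show ?thesis
  proof
    assume h1: "d' = u*B' + (d + u*B)"
    from e2 show ?thesis
    proof
      assume "d' = u*B' + (d + (u+1)*B)"
      with h1 have "u*B = u*B + B" by (simp add: distrib_right)
      with B0 show ?thesis by simp
    next
      assume "d' = (u+1)*B' + (d + (u+1)*B)"
      with h1 have "u*B' + (d + u*B) = (u*B' + (d + u*B)) + (B' + B)" by (simp add: distrib_right add_ac)
      then have "B' + B = 0" by simp
      then have "B' = B" using c2(3) by blast
      with h1 show ?thesis by (simp add: c2 add_ac)
    qed
  next
    assume h1: "d' = (u+1)*B' + (d + u*B)"
    from e2 show ?thesis
    proof
      assume "d' = u*B' + (d + (u+1)*B)"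
      with h1 have "u*B' + (d + u*B) + B' = (u*B' + (d + u*B)) + B" by (simp add: distrib_right add_ac)
      then have "B' = B" by simp
      with h1 show ?thesis by (simp add: c2 add_ac distrib_right)
    next
      assume "d' = (u+1)*B' + (d + (u+1)*B)"
      with h1 have "u*B = u*B + B" by (simp add: distrib_right add_ac)
      with B0 show ?thesis by simp
    qed
  qed
qed

lemma c2_case2:
  fixes u A B C c d t :: "'a::field"
  assumes two: "(2::'a) = 0"
    and h: "c + A = u*C + (c + u*C + E + t*B) + E \<or> c + A = (u+1)*C + (c + u*C + E + t*B) + E"
  shows "A = t*B \<or> A = C + t*B"
proof -
  note c2 = char2_simps[OF two]
  from h show ?thesis
  proof
    assume "c + A = u*C + (c + u*C + E + t*B) + E"
    then have "c + A = c + t*B + (u*C + u*C) + (E + E)" by (simp add: add_ac)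
    then show ?thesis by (simp add: c2)
  next
    assume "c + A = (u+1)*C + (c + u*C + E + t*B) + E"
    then have "c + A = c + (C + t*B) + (u*C + u*C) + (E + E)" by (simp add: add_ac distrib_right)
    then show ?thesis by (simp add: c2)
  qed
qed

lemma c2_case3:
  fixes X P Q Y :: "'a::field"
  assumes two: "(2::'a) = 0" and h: "X = (X + P + Q + Y) + Y"
  shows "P = Q"
proof -
  note c2 = char2_simps[OF two]
  have "X + P + Q + Y + Y = X + (P + Q) + (Y + Y)" by (simp only: add.assoc)
  also have "\<dots> = X + (P + Q)" by (simp only: c2(1) add_0_right)
  finally have "X + 0 = X + (P + Q)" using h by simp
  then have "P + Q = 0" by (simp only: add_left_cancel)
  then show ?thesis using c2(3) by blast
qed

theorem lemma8p2:
  fixes f e q q0 :: nat and u :: "'a::{field,finite}" and \<sigma> :: "'a^3^3 \<Rightarrow> 'a^3^3"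
  assumes "q = 2 ^ f" and "CARD('a) = q" and "f \<ge> 4"
    and "q0 = 2 ^ e" and "q0 < q" and "gcd (q - 1) (q0 ^ 2 - 1) = 1"
    and "u \<in> U_set q0"
    and "graph_automorphism (Kgrp q0) (Gamma_adj q0 u) \<sigma>"
    and "\<sigma> (Phi q0 0 0) = Phi q0 0 0"
    and "\<forall>x\<in>Omega_inf q0. \<sigma> x = x"
  shows "\<forall>x\<in>Kgrp q0. \<sigma> x = x"
proof -
  have two: "(2::'a) = 0" using char2_from_card[of f] assms by simp
  note c2 = char2_simps(1,2)[OF two]
  have frob: "\<And>x y::'a. (x+y)^q0 = x^q0 + y^q0" using char2_frob[OF two] assms(4) by simp
  note adj = adj_iff[OF two frob]
  have q16: "q \<ge> 16"
  proof -
    have "(2::nat)^4 \<le> 2^f" using assms(3) by (rule power_increasing) simp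
    then show ?thesis using assms(1) by simp
  qed
  have q0pos: "q0 \<ge> 1" using assms(4) by simp
  have fac: "q0^2 - 1 = (q0 - 1) * (q0 + 1)"
    using q0pos by (simp add: power2_eq_square algebra_simps)
  have cop: "coprime (q0 + 1) (CARD('a) - 1)" "coprime (q0 - 1) (CARD('a) - 1)"
  proof -
    have "coprime (q-1) ((q0-1)*(q0+1))" using assms(6) fac by (simp add: coprime_iff_gcd_eq_1)
    then have "coprime (q-1) (q0+1)" "coprime (q-1) (q0-1)" by (simp_all only: coprime_mult_right_iff)
    then show "coprime (q0 + 1) (CARD('a) - 1)" "coprime (q0 - 1) (CARD('a) - 1)"
      using assms(2) by (simp_all add: coprime_commute)
  qed
  have q02: "q0 \<ge> 2"
  proof (rule ccontr)
    assume "\<not> q0 \<ge> 2"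
    then have "q0 = 1" using q0pos by simp
    then show False using assms(6) q16 by simp
  qed
  have inj1: "x = y" if "x^(q0+1) = y^(q0+1)" for x y :: 'a
    using pow_inj[OF cop(1) _ that] by simp
  have inj2: "x = y" if "x^(q0-1) = y^(q0-1)" for x y :: 'a
    using pow_inj[OF cop(2) _ that] q02 by simp
  have inK: "\<And>a c. Phi q0 a c \<in> Kgrp q0" unfolding Kgrp_def by blast
  have bij: "bij_betw \<sigma> (Kgrp q0) (Kgrp q0)" and pres: "\<And>x y. x \<in> Kgrp q0 \<Longrightarrow> y \<in> Kgrp q0 \<Longrightarrow>
      Gamma_adj q0 u x y \<Longrightarrow> Gamma_adj q0 u (\<sigma> x) (\<sigma> y)"
    using assms(8) unfolding graph_automorphism_def by auto
  have img: "\<And>a c. \<exists>a' c'. \<sigma> (Phi q0 a c) = Phi q0 a' c'"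
  proof -
    fix a c
    have "\<sigma> (Phi q0 a c) \<in> Kgrp q0" using bij inK bij_betwE by blast
    then show "\<exists>a' c'. \<sigma> (Phi q0 a c) = Phi q0 a' c'" unfolding Kgrp_def by blast
  qed
  have fix0: "\<And>c. \<sigma> (Phi q0 0 c) = Phi q0 0 c"
  proof -
    fix c :: 'a
    show "\<sigma> (Phi q0 0 c) = Phi q0 0 c"
    proof (cases "c = 0")
      case True then show ?thesis using assms(9) by simp
    next
      case False
      then have "Phi q0 0 c \<in> Omega_inf q0" unfolding Omega_inf_def by blast
      then show ?thesis using assms(10) by blast
    qed
  qed
  have adjmap: "\<And>a c b d. Gamma_adj q0 u (Phi q0 a c) (Phi q0 b d) \<Longrightarrow>
      Gamma_adj q0 u (\<sigma> (Phi q0 a c)) (\<sigma> (Phi q0 b d))"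
    using pres inK by blast
  have step1: "\<sigma> (Phi q0 b d) = Phi q0 b d \<or> \<sigma> (Phi q0 b d) = Phi q0 b (d + b^(q0+1))"
    if b0: "b \<noteq> 0" for b d
  proof -
    define B where "B = b^(q0+1)"
    have B0: "B \<noteq> 0" using b0 unfolding B_def by simp
    obtain b' d' where sd: "\<sigma> (Phi q0 b d) = Phi q0 b' d'" using img by blast
    define B' where "B' = b'^(q0+1)"
    have "Gamma_adj q0 u (Phi q0 b d) (Phi q0 0 (d + u*B))"
      using b0 by (simp add: adj B_def c2 add_ac)
    then have h1: "Gamma_adj q0 u (Phi q0 b' d') (Phi q0 0 (d + u*B))"
      using adjmap sd fix0 by metis
    have "Gamma_adj q0 u (Phi q0 b d) (Phi q0 0 (d + (u+1)*B))"
      using b0 by (simp add: adj B_def c2 add_ac)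
    then have h2: "Gamma_adj q0 u (Phi q0 b' d') (Phi q0 0 (d + (u+1)*B))"
      using adjmap sd fix0 by metis
    from h1 have e1: "d' = u*B' + (d + u*B) \<or> d' = (u+1)*B' + (d + u*B)"
      by (simp add: adj B'_def)
    from h2 have e2: "d' = u*B' + (d + (u+1)*B) \<or> d' = (u+1)*B' + (d + (u+1)*B)"
      by (simp add: adj B'_def)
    from e1 e2 have "B' = B \<and> (d' = d \<or> d' = d + B)"
      using c2_case1[OF two B0] by blast
    then have BB: "B' = B" and dd: "d' = d \<or> d' = d + B" by auto
    have "b' = b" by (rule inj1) (use BB in \<open>simp add: B_def B'_def\<close>)
    with dd show ?thesis using sd B_def by auto
  qed
  have step2: "\<sigma> (Phi q0 a c) \<noteq> Phi q0 a (c + a^(q0+1))" if a0: "a \<noteq> 0" for a c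
  proof
    assume sa: "\<sigma> (Phi q0 a c) = Phi q0 a (c + a^(q0+1))"
    have "card {0,a} \<le> 2" by (simp add: card_insert_if)
    then have "UNIV \<noteq> {0,a}" using q16 assms(2) by auto
    then obtain b where b: "b \<noteq> 0" "b \<noteq> a" by blast
    define A where "A = a^(q0+1)"
    define B where "B = b^(q0+1)"
    define C where "C = (a+b)^(q0+1)"
    define d where "d = c + u*C + (a+b)^q0*b"
    have "Gamma_adj q0 u (Phi q0 a c) (Phi q0 b d)"
      using b by (simp add: adj C_def d_def c2 add_ac)
    then have h: "Gamma_adj q0 u (Phi q0 a (c + A)) (\<sigma> (Phi q0 b d))"
      using adjmap sa A_def by metis
    obtain t where t: "t = 0 \<or> t = 1" "\<sigma> (Phi q0 b d) = Phi q0 b (d + t*B)"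
      using step1[OF b(1), of d] B_def by (metis add_0_right mult_1 mult_zero_left)
    from h t(2) have "c + A = u*C + (d + t*B) + (a+b)^q0*b \<or> c + A = (u+1)*C + (d + t*B) + (a+b)^q0*b"
      by (simp add: adj C_def)
    then have "A = t*B \<or> A = C + t*B"
      unfolding d_def by (rule c2_case2[OF two])
    moreover have "A \<noteq> 0" using a0 A_def by simp
    moreover have "A \<noteq> B" using inj1 b(2) A_def B_def by metis
    moreover have "A \<noteq> C"
    proof
      assume "A = C"
      then have "a = a + b" using inj1 A_def C_def by metis
      then show False using b(1) by simp
    qed
    moreover have "A \<noteq> C + B"
    proof
      assume "A = C + B"
      have "C = (a^q0 + b^q0) * (a+b)" unfolding C_def by (simp add: frob)
      then have Cx: "C = a^q0 * a + a^q0 * b + b^q0 * a + b^q0 * b" by (simp add: algebra_simps)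
      have Ax: "A = a^q0 * a" and Bx: "B = b^q0 * b" unfolding A_def B_def by (simp_all add: mult.commute)
      from \<open>A = C + B\<close> have "a^q0 * a = (a^q0 * a + a^q0 * b + b^q0 * a + b^q0 * b) + b^q0 * b"
        by (simp only: Ax Bx Cx)
      then have ab: "a^q0 * b = b^q0 * a" by (rule c2_case3[OF two])
      obtain m where m: "q0 = Suc m" using q0pos by (cases q0) auto
      from ab have "(a * b) * a^m = (a * b) * b^m" by (simp add: m mult_ac)
      then have "a^m = b^m" using a0 b(1) by simp
      then have "a^(q0-1) = b^(q0-1)" using m by simp
      then have "a = b" by (rule inj2)
      then show False using b(2) by simp
    qed
    ultimately show False using t(1) by auto
  qed
  show ?thesis
  proof
    fix x :: "'a^3^3" assume "x \<in> Kgrp q0"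
    then obtain a c where x: "x = Phi q0 a c" unfolding Kgrp_def by blast
    show "\<sigma> x = x"
    proof (cases "a = 0")
      case True then show ?thesis using x fix0 by simp
    next
      case False
      then show ?thesis using step1[OF False, of c] step2[OF False, of c] x by auto
    qed
  qed
qed

end
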